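(* Let $(\Omega(\mathcal{A}),\mathrm{d},\bar{\mathrm{d}})$ be a bidifferential graded algebra and $M,N\ge1$. Let $P$ be an $N\times N$ matrix over $\mathcal{A}$, let $K$ be an $N\times M$ matrix over $\mathcal{A}$ with $\mathrm{d}K=\bar{\mathrm{d}}K=0$, and let $X'$ ($N\times N$) and $Y'$ ($M\times N$) be matrices over $\mathcal{A}$ with $$\bar{\mathrm{d}}X'=(\mathrm{d}X')P,\qquad \bar{\mathrm{d}}Y'=(\mathrm{d}Y')P .$$ (a) Let $R$ ($N\times N$) and $L$ ($M\times M$) be matrices over $\mathcal{A}$ with $\mathrm{d}R=\mathrm{d}L=0$, and suppose $L\,Y'=Y'\,P$ and $R\,X'=X'\,P$. If $X'-KY'$ is invertible, then $\Phi=Y'(X'-KY')^{-1}$ satisfies $\bar{\mathrm{d}}\,\mathrm{d}\,\Phi=(\mathrm{d}\Phi)\,Q\,(\mathrm{d}\Phi)$ with $Q=RK-KL$. (b) Suppose $M=N$, let $L$ be an $N\times N$ matrix over $\mathcal{A}$ with $\mathrm{d}L=0$, and suppose $L\,Y'=Y'\,P$ and $L\,X'+Y'=X'\,P$. If $X'-KY'$ is invertible, then $\Phi=Y'(X'-KY')^{-1}$ satisfies $\bar{\mathrm{d}}\,\mathrm{d}\,\Phi=(\mathrm{d}\Phi)\,Q\,(\mathrm{d}\Phi)$ with $Q=I+[L,K]=I+LK-KL$.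
   Context: $\mathcal{A}$ is a unital associative algebra over $\mathbb{C}$ with identity $I$. A bidifferential graded algebra $(\Omega(\mathcal{A}),\mathrm{d},\bar{\mathrm{d}})$ consists of a graded associative algebra $\Omega(\mathcal{A})=\bigoplus_{r\ge 0}\Omega^r(\mathcal{A})$ with $\Omega^0(\mathcal{A})=\mathcal{A}$ (each $\Omega^r(\mathcal{A})$ an $\mathcal{A}$-bimodule) together with two linear maps $\mathrm{d},\bar{\mathrm{d}}:\Omega^r(\mathcal{A})\to\Omega^{r+1}(\mathcal{A})$ satisfying the graded Leibniz rule $\mathrm{d}(\alpha\beta)=(\mathrm{d}\alpha)\beta+(-1)^r\alpha\,\mathrm{d}\beta$ for $\alpha\in\Omega^r(\mathcal{A})$ (and likewise for $\bar{\mathrm{d}}$), and $\mathrm{d}^2=\bar{\mathrm{d}}^2=0$, $\mathrm{d}\bar{\mathrm{d}}+\bar{\mathrm{d}}\mathrm{d}=0$. The maps $\mathrm{d},\bar{\mathrm{d}}$ are applied entrywise to matrices with entries in $\Omega(\mathcal{A})$, and products of such matrices use the matrix product together with the product of $\Omega(\mathcal{A})$. In (b), $I$ denotes the $N\times N$ identity matrix. *)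

theory Defs
  imports Complex_Main "Jordan_Normal_Form.Matrix"
begin

text \<open>The degree-0 part Om 0 is
the algebra A.\<close>

definition complex_algebra_sc :: "(complex \<Rightarrow> 'w::ring_1 \<Rightarrow> 'w) \<Rightarrow> bool" where
  "complex_algebra_sc sc \<longleftrightarrow>
     (\<forall>a x y. sc a (x + y) = sc a x + sc a y) \<and>
     (\<forall>a b x. sc (a + b) x = sc a x + sc b x) \<and>
     (\<forall>a b x. sc a (sc b x) = sc (a * b) x) \<and>
     (\<forall>x. sc 1 x = x) \<and>
     (\<forall>a x y. sc a x * y = sc a (x * y)) \<and>
     (\<forall>a x y. x * sc a y = sc a (x * y))"

definition graded_algebra ::
  "(complex \<Rightarrow> 'w::ring_1 \<Rightarrow> 'w) \<Rightarrow> (nat \<Rightarrow> 'w set) \<Rightarrow> bool" where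
  "graded_algebra sc Om \<longleftrightarrow>
     complex_algebra_sc sc \<and>
     (\<forall>r. 0 \<in> Om r \<and> (\<forall>x\<in>Om r. \<forall>y\<in>Om r. x + y \<in> Om r) \<and>
          (\<forall>a. \<forall>x\<in>Om r. sc a x \<in> Om r)) \<and>
     (\<forall>r s. \<forall>x\<in>Om r. \<forall>y\<in>Om s. x * y \<in> Om (r + s)) \<and>
     1 \<in> Om 0 \<and>
     (\<forall>w. \<exists>!c :: nat \<Rightarrow> 'w. finite {r. c r \<noteq> 0} \<and> (\<forall>r. c r \<in> Om r) \<and>
            w = (\<Sum>r\<in>{r. c r \<noteq> 0}. c r))"

definition graded_derivation ::
  "(complex \<Rightarrow> 'w::ring_1 \<Rightarrow> 'w) \<Rightarrow> (nat \<Rightarrow> 'w set) \<Rightarrow> ('w \<Rightarrow> 'w) \<Rightarrow> bool" where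
  "graded_derivation sc Om d \<longleftrightarrow>
     (\<forall>x y. d (x + y) = d x + d y) \<and>
     (\<forall>a x. d (sc a x) = sc a (d x)) \<and>
     (\<forall>r. \<forall>x\<in>Om r. d x \<in> Om (Suc r)) \<and>
     (\<forall>r. \<forall>x\<in>Om r. \<forall>y. d (x * y) = d x * y + (-1) ^ r * x * d y)"

definition bidiff_graded_algebra ::
  "(complex \<Rightarrow> 'w::ring_1 \<Rightarrow> 'w) \<Rightarrow> (nat \<Rightarrow> 'w set) \<Rightarrow> ('w \<Rightarrow> 'w) \<Rightarrow> ('w \<Rightarrow> 'w) \<Rightarrow> bool" where
  "bidiff_graded_algebra sc Om d db \<longleftrightarrow>
     graded_algebra sc Om \<and> graded_derivation sc Om d \<and> graded_derivation sc Om db \<and>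
     (\<forall>x. d (d x) = 0) \<and> (\<forall>x. db (db x) = 0) \<and> (\<forall>x. d (db x) + db (d x) = 0)"

definition mat_over :: "'w set \<Rightarrow> nat \<Rightarrow> nat \<Rightarrow> 'w mat set" where
  "mat_over S m n = {A. A \<in> carrier_mat m n \<and> (\<forall>i<m. \<forall>j<n. A $$ (i, j) \<in> S)}"

end

theory Submission
  imports Defs
begin

definition deriv_ok :: "('w::ring_1 \<Rightarrow> 'w) \<Rightarrow> (nat \<Rightarrow> 'w set) \<Rightarrow> bool" where
  "deriv_ok d Om \<longleftrightarrow> (\<forall>x y. d (x + y) = d x + d y) \<and>
     (\<forall>r. \<forall>x\<in>Om r. d x \<in> Om (Suc r)) \<and>
     (\<forall>r. \<forall>x\<in>Om r. \<forall>y. d (x * y) = d x * y + (-1) ^ r * x * d y)"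

lemma gd_ok: "graded_derivation sc Om d \<Longrightarrow> deriv_ok d Om"
  unfolding graded_derivation_def deriv_ok_def by blast

context fixes d :: "'w::ring_1 \<Rightarrow> 'w" and Om assumes ok: "deriv_ok d Om"
begin

lemma d_add: "d (x + y) = d x + d y" using ok unfolding deriv_ok_def by blast
lemma d_0: "d 0 = 0" using d_add[of 0 0] by simp
lemma d_uminus: "d (- x) = - d x"
  using d_add[of x "-x"] d_0 minus_unique[of "d x" "d (-x)"] by simp
lemma d_minus: "d (x - y) = d x - d y"
  using d_add[of x "-y"] d_uminus by simp
lemma d_sum: "d (sum f S) = sum (\<lambda>i. d (f i)) S"
  by (induction S rule: infinite_finite_induct) (auto simp: d_0 d_add)
lemma d_Om: "x \<in> Om r \<Longrightarrow> d x \<in> Om (Suc r)" using ok unfolding deriv_ok_def by blast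
lemma d_leib: "x \<in> Om r \<Longrightarrow> d (x * y) = d x * y + (-1) ^ r * x * d y"
  using ok unfolding deriv_ok_def by blast

lemma D_add: "A \<in> carrier_mat n m \<Longrightarrow> B \<in> carrier_mat n m \<Longrightarrow>
   map_mat d (A + B) = map_mat d A + map_mat d B"
  by (intro eq_matI) (auto simp: d_add)
lemma D_minus: "A \<in> carrier_mat n m \<Longrightarrow> B \<in> carrier_mat n m \<Longrightarrow>
   map_mat d (A - B) = map_mat d A - map_mat d B"
  by (intro eq_matI) (auto simp: d_minus)
lemma D_one: "1 \<in> Om 0 \<Longrightarrow> map_mat d (1\<^sub>m n) = 0\<^sub>m n n"
proof -
  assume "1 \<in> Om 0"
  from d_leib[OF this, of 1] have "d 1 = 0" by simp
  then show ?thesis by (intro eq_matI) (auto simp: d_0)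
qed

lemma D_mult_gen: assumes A: "A \<in> mat_over (Om r) n m" and B: "B \<in> carrier_mat m k"
  shows "map_mat d (A * B) = map_mat d A * B + ((-1)^r * 1) \<cdot>\<^sub>m (A * map_mat d B)"
proof (intro eq_matI)
  fix i j assume ij: "i < dim_row (map_mat d A * B + ((-1)^r * 1) \<cdot>\<^sub>m (A * map_mat d B))"
     "j < dim_col (map_mat d A * B + ((-1)^r * 1) \<cdot>\<^sub>m (A * map_mat d B))"
  have Ac: "A \<in> carrier_mat n m" and Ae: "\<And>i l. i < n \<Longrightarrow> l < m \<Longrightarrow> A $$ (i,l) \<in> Om r"
    using A unfolding mat_over_def by auto
  from ij Ac B have i: "i < n" and j: "j < k" by auto
  have "map_mat d (A * B) $$ (i, j) = d (\<Sum>l<m. A $$ (i,l) * B $$ (l,j))"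
    using i j Ac B by (simp add: scalar_prod_def atLeast0LessThan)
  also have "\<dots> = (\<Sum>l<m. d (A $$ (i,l)) * B $$ (l,j) + (-1)^r * A $$ (i,l) * d (B $$ (l,j)))"
    by (simp add: d_sum d_leib[OF Ae[OF i]])
  also have "\<dots> = (map_mat d A * B + ((-1)^r * 1) \<cdot>\<^sub>m (A * map_mat d B)) $$ (i,j)"
    using i j Ac B by (simp add: scalar_prod_def atLeast0LessThan sum.distrib sum_distrib_left mult.assoc)
  finally show "map_mat d (A * B) $$ (i, j) = (map_mat d A * B + ((-1)^r * 1) \<cdot>\<^sub>m (A * map_mat d B)) $$ (i,j)" .
qed (insert A B, auto simp: mat_over_def)

lemma D_mult0: assumes A: "A \<in> mat_over (Om 0) n m" and B: "B \<in> carrier_mat m k"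
  shows "map_mat d (A * B) = map_mat d A * B + A * map_mat d B"
  unfolding D_mult_gen[OF A B] using A B by (intro eq_matI) (auto simp: mat_over_def)

lemma D_mult1: assumes A: "A \<in> mat_over (Om 1) n m" and B: "B \<in> carrier_mat m k"
  shows "map_mat d (A * B) = map_mat d A * B - A * map_mat d B"
  unfolding D_mult_gen[OF A B] using A B by (intro eq_matI) (auto simp: mat_over_def)

lemma D_over: "A \<in> mat_over (Om r) n m \<Longrightarrow> map_mat d A \<in> mat_over (Om (Suc r)) n m"
  by (auto simp: mat_over_def d_Om)

lemma D_inv: assumes one: "1 \<in> Om 0" and Z: "Z \<in> mat_over (Om 0) n n" and B: "B \<in> carrier_mat n n"
  and ZB: "Z * B = 1\<^sub>m n" and BZ: "B * Z = 1\<^sub>m n"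
  shows "map_mat d B = - (B * (map_mat d Z * B))"
proof -
  have Zc: "Z \<in> carrier_mat n n" using Z by (simp add: mat_over_def)
  have "map_mat d Z * B + Z * map_mat d B = 0\<^sub>m n n"
    using D_mult0[OF Z B] ZB D_one[OF one] by simp
  hence "B * (map_mat d Z * B + Z * map_mat d B) = 0\<^sub>m n n" using B by simp
  also have "B * (map_mat d Z * B + Z * map_mat d B) = B * (map_mat d Z * B) + map_mat d B"
  proof -
    have c: "map_mat d Z * B \<in> carrier_mat n n" "Z * map_mat d B \<in> carrier_mat n n"
      using B Zc by auto
    have "B * (Z * map_mat d B) = (B * Z) * map_mat d B"
      using B Zc by (simp add: assoc_mult_mat[of B n n Z n "map_mat d B" n])
    also have "\<dots> = map_mat d B" using BZ B by simp
    finally show ?thesis by (simp add: mult_add_distrib_mat[OF B c])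
  qed
  finally have e: "B * (map_mat d Z * B) + map_mat d B = 0\<^sub>m n n" .
  show ?thesis
  proof (intro eq_matI)
    fix i j assume "i < dim_row (- (B * (map_mat d Z * B)))" "j < dim_col (- (B * (map_mat d Z * B)))"
    hence ij: "i < n" "j < n" using B by auto
    from arg_cong[OF e, of "\<lambda>A. A $$ (i,j)"] ij B Zc
    have "(B * (map_mat d Z * B)) $$ (i,j) + map_mat d B $$ (i,j) = 0" by simp
    then show "map_mat d B $$ (i, j) = (- (B * (map_mat d Z * B))) $$ (i, j)"
      using ij B Zc by (simp add: minus_unique)
  qed (insert B, auto)
qed

lemma D_phi: assumes one: "1 \<in> Om 0" and Z: "Z \<in> mat_over (Om 0) n n" and B: "B \<in> carrier_mat n n"
  and ZB: "Z * B = 1\<^sub>m n" and BZ: "B * Z = 1\<^sub>m n" and Y: "Y \<in> mat_over (Om 0) m n"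
  shows "map_mat d (Y * B) = (map_mat d Y - (Y * B) * map_mat d Z) * B"
proof -
  have Zc: "Z \<in> carrier_mat n n" and Yc: "Y \<in> carrier_mat m n" using Z Y by (auto simp: mat_over_def)
  have "map_mat d (Y * B) = map_mat d Y * B + Y * (- (B * (map_mat d Z * B)))"
    by (simp add: D_mult0[OF Y B] D_inv[OF one Z B ZB BZ])
  also have "\<dots> = (map_mat d Y - (Y * B) * map_mat d Z) * B"
  proof -
    have c: "map_mat d Y \<in> carrier_mat m n" "Y * B * map_mat d Z \<in> carrier_mat m n"
      using Yc Zc B by auto
    have "(map_mat d Y - (Y * B) * map_mat d Z) * B = map_mat d Y * B - (Y * B * map_mat d Z) * B"
      by (rule minus_mult_distrib_mat[OF c B])
    also have "(Y * B * map_mat d Z) * B = Y * (B * (map_mat d Z * B))"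
      using Yc Zc B by (simp add: assoc_mult_mat[of Y m n "B * map_mat d Z" n B n]
          assoc_mult_mat[of B n n "map_mat d Z" n B n])
    also have "map_mat d Y * B - Y * (B * (map_mat d Z * B)) = map_mat d Y * B + Y * (- (B * (map_mat d Z * B)))"
      using Yc Zc B by (subst minus_add_uminus_mat[of _ m n]) auto
    finally show ?thesis by simp
  qed
  finally show ?thesis .
qed

end

lemma sum_Om: assumes z: "0 \<in> S" and a: "\<forall>x\<in>S. \<forall>y\<in>S. x + y \<in> S"
  shows "(\<forall>i\<in>I. f i \<in> S) \<Longrightarrow> sum f I \<in> S"
  by (induction I rule: infinite_finite_induct) (auto simp: z a)

lemma mult_over:
  assumes z: "0 \<in> U" and a: "\<forall>x\<in>U. \<forall>y\<in>U. x + y \<in> U"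
  and m: "\<forall>x\<in>S. \<forall>y\<in>T. x * y \<in> U"
  and A: "A \<in> mat_over S n m" and B: "B \<in> mat_over T m k"
  shows "A * B \<in> mat_over U n k"
  using A B unfolding mat_over_def
  by (auto simp: scalar_prod_def intro!: sum_Om[OF z a] m[rule_format])

lemma minus_over:
  fixes S :: "'w::ring_1 set"
  assumes a: "\<forall>x\<in>S. \<forall>y\<in>S. x + y \<in> S" and ng: "\<forall>x\<in>S. - x \<in> S"
  and A: "A \<in> mat_over S n m" and B: "B \<in> mat_over S n m"
  shows "A - B \<in> mat_over S n m"
  proof -
  have "\<And>x y. x \<in> S \<Longrightarrow> y \<in> S \<Longrightarrow> x - y \<in> S"
  proof -
    fix x y assume "x \<in> S" "y \<in> S"
    hence "x + (- y) \<in> S" using a ng by blast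
    thus "x - y \<in> S" by simp
  qed
  then show ?thesis using A B unfolding mat_over_def by (auto intro: minus_carrier_mat)
qed

lemma core:
  fixes d db :: "'w::ring_1 \<Rightarrow> 'w" and Om :: "nat \<Rightarrow> 'w set"
  assumes okd: "deriv_ok d Om" and okdb: "deriv_ok db Om"
  and dd: "\<forall>x. d (d x) = 0" and anti: "\<forall>x. db (d x) = - d (db x)"
  and one: "1 \<in> Om 0" and z0: "0 \<in> Om 0" and a0: "\<forall>x\<in>Om 0. \<forall>y\<in>Om 0. x + y \<in> Om 0"
  and n0: "\<forall>x\<in>Om 0. - x \<in> Om 0" and m0: "\<forall>x\<in>Om 0. \<forall>y\<in>Om 0. x * y \<in> Om 0"
  and P: "P \<in> carrier_mat N N"
  and K: "K \<in> mat_over (Om 0) N M"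
  and dK: "map_mat d K = 0\<^sub>m N M" and dbK: "map_mat db K = 0\<^sub>m N M"
  and X': "X' \<in> mat_over (Om 0) N N"
  and Y': "Y' \<in> mat_over (Om 0) M N"
  and eqX: "map_mat db X' = map_mat d X' * P"
  and eqY: "map_mat db Y' = map_mat d Y' * P"
  and B: "B \<in> mat_over (Om 0) N N"
  and ZB: "(X' - K * Y') * B = 1\<^sub>m N" and BZ: "B * (X' - K * Y') = 1\<^sub>m N"
  shows "map_mat db (map_mat d (Y' * B)) = map_mat d (Y' * B) * map_mat d ((X' - K * Y') * (P * B))"
proof -
  define Z where "Z = X' - K * Y'"
  define Phi where "Phi = Y' * B"
  have Kc: "K \<in> carrier_mat N M" and X'c: "X' \<in> carrier_mat N N" and Y'c: "Y' \<in> carrier_mat M N"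
    and Bc: "B \<in> carrier_mat N N" using K X' Y' B by (auto simp: mat_over_def)
  have KY: "K * Y' \<in> mat_over (Om 0) N N" using mult_over[OF z0 a0 m0 K Y'] by simp
  have Zo: "Z \<in> mat_over (Om 0) N N" unfolding Z_def by (rule minus_over[OF a0 n0 X' KY])
  hence Zc: "Z \<in> carrier_mat N N" by (simp add: mat_over_def)
  have Phio: "Phi \<in> mat_over (Om 0) M N" unfolding Phi_def
    using mult_over[OF z0 a0 m0 Y' B] by simp
  hence Phic: "Phi \<in> carrier_mat M N" by (simp add: mat_over_def)
  have ZB': "Z * B = 1\<^sub>m N" and BZ': "B * Z = 1\<^sub>m N" using ZB BZ by (auto simp: Z_def)
  have DZ: "map_mat d Z = map_mat d X' - K * map_mat d Y'"
    unfolding Z_def using D_minus[OF okd X'c, of "K * Y'"] D_mult0[OF okd K, of Y'] Kc Y'c dK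
    by simp
  have DbZ0: "map_mat db Z = map_mat db X' - K * map_mat db Y'"
    unfolding Z_def using D_minus[OF okdb X'c, of "K * Y'"] D_mult0[OF okdb K, of Y'] Kc Y'c dbK
    by simp
  have DbZ: "map_mat db Z = map_mat d Z * P"
  proof -
    have "map_mat db Z = map_mat d X' * P - K * (map_mat d Y' * P)" using DbZ0 eqX eqY by simp
    also have "K * (map_mat d Y' * P) = (K * map_mat d Y') * P"
      using Kc Y'c P by (simp add: assoc_mult_mat[of K N M "map_mat d Y'" N P N])
    also have "map_mat d X' * P - (K * map_mat d Y') * P = (map_mat d X' - K * map_mat d Y') * P"
      using Kc Y'c P X'c by (subst minus_mult_distrib_mat[of _ N N]) auto
    finally show ?thesis using DZ by simp
  qed
  define W where "W = map_mat d Y' - Phi * map_mat d Z"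
  have Wc: "W \<in> carrier_mat M N" using Y'c Phic Zc unfolding W_def by (intro minus_carrier_mat) simp
  have DPhi: "map_mat d Phi = W * B"
    unfolding Phi_def W_def using D_phi[OF okd one Zo Bc ZB' BZ' Y'] by (simp add: Phi_def)
  have DbPhi: "map_mat db Phi = W * (P * B)"
  proof -
    have "map_mat db Phi = (map_mat d Y' * P - Phi * (map_mat d Z * P)) * B"
      using D_phi[OF okdb one Zo Bc ZB' BZ' Y'] eqY DbZ by (simp add: Phi_def)
    also have "Phi * (map_mat d Z * P) = (Phi * map_mat d Z) * P"
      using Phic Zc P by (simp add: assoc_mult_mat[of Phi M N "map_mat d Z" N P N])
    also have "map_mat d Y' * P - (Phi * map_mat d Z) * P = W * P"
      unfolding W_def using Phic Zc P Y'c by (subst minus_mult_distrib_mat[of _ M N]) auto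
    also have "W * P * B = W * (P * B)" using Wc P Bc by simp
    finally show ?thesis .
  qed
  define C where "C = Z * (P * B)"
  have Cc: "C \<in> carrier_mat N N" using Zc P Bc by (simp add: C_def)
  have E1: "map_mat db Phi = map_mat d Phi * C"
  proof -
    have "map_mat d Phi * C = W * (B * (Z * (P * B)))"
      using Wc Bc Zc P by (simp add: DPhi C_def assoc_mult_mat[of W M N B N "Z * (P * B)" N])
    also have "B * (Z * (P * B)) = (B * Z) * (P * B)"
      using Bc Zc P by (simp add: assoc_mult_mat[of B N N Z N "P * B" N])
    also have "\<dots> = P * B" using BZ' P Bc by simp
    finally show ?thesis using DbPhi by simp
  qed
  have DPhio: "map_mat d Phi \<in> mat_over (Om 1) M N" using D_over[OF okd Phio] by simp
  have DDPhi: "map_mat d (map_mat d Phi) = 0\<^sub>m M N"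
    using Phic dd by (intro eq_matI) auto
  have E2: "map_mat d (map_mat db Phi) = - (map_mat d Phi * map_mat d C)"
    unfolding E1 D_mult1[OF okd DPhio Cc] DDPhi
    using Phic Cc by (intro eq_matI) auto
  have "map_mat db (map_mat d Phi) = - map_mat d (map_mat db Phi)"
    using Phic anti by (intro eq_matI) auto
  also have "\<dots> = map_mat d Phi * map_mat d C" using E2 by simp
  finally show ?thesis by (simp add: Phi_def C_def Z_def)
qed


lemma D_const: assumes ok: "deriv_ok d Om" and A: "A \<in> mat_over (Om 0) n m"
  and dA: "map_mat d A = 0\<^sub>m n m" and B: "B \<in> carrier_mat m k"
  shows "map_mat d (A * B) = A * map_mat d B"
proof -
  have "A * map_mat d B \<in> carrier_mat n k" using A B by (auto simp: mat_over_def intro!: mult_carrier_mat)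
  then show ?thesis using D_mult0[OF ok A B] dA A B by (simp add: mat_over_def)
qed

lemma minus_eq_imp: fixes A :: "'a::ab_group_add mat" assumes "A \<in> carrier_mat n m" "C \<in> carrier_mat n m" "E \<in> carrier_mat n m"
  and e: "A - C = E" shows "A = E + C"
proof (intro eq_matI)
  fix i j assume "i < dim_row (E + C)" "j < dim_col (E + C)"
  hence ij: "i < n" "j < m" using assms by auto
  have "(A - C) $$ (i,j) = E $$ (i,j)" using e by simp
  hence "A $$ (i,j) - C $$ (i,j) = E $$ (i,j)" using ij assms(1-3) by simp
  then show "A $$ (i, j) = (E + C) $$ (i, j)" using ij assms(1-3) by (simp add: algebra_simps)
qed (insert assms, auto)

lemma Cform:
  fixes d :: "'w::ring_1 \<Rightarrow> 'w" and Om :: "nat \<Rightarrow> 'w set"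
  assumes okd: "deriv_ok d Om"
  and one: "1 \<in> Om 0"
  and P: "P \<in> carrier_mat N N"
  and K: "K \<in> mat_over (Om 0) N M"
  and dK: "map_mat d K = 0\<^sub>m N M"
  and X': "X' \<in> carrier_mat N N"
  and Y': "Y' \<in> carrier_mat M N"
  and B: "B \<in> carrier_mat N N"
  and ZB: "(X' - K * Y') * B = 1\<^sub>m N"
  and G: "G \<in> mat_over (Om 0) N N" and dG: "map_mat d G = 0\<^sub>m N N"
  and H: "H \<in> mat_over (Om 0) N M" and dH: "map_mat d H = 0\<^sub>m N M"
  and L: "L \<in> mat_over (Om 0) M M" and dL: "map_mat d L = 0\<^sub>m M M"
  and ZP: "(X' - K * Y') * P = G * X' + H * Y' - K * (L * Y')"
  shows "map_mat d ((X' - K * Y') * (P * B)) = (G * K + H - K * L) * map_mat d (Y' * B)"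
proof -
  define Phi where "Phi = Y' * B"
  have Kc: "K \<in> carrier_mat N M" and Gc: "G \<in> carrier_mat N N" and Hc: "H \<in> carrier_mat N M"
    and Lc: "L \<in> carrier_mat M M" using K G H L by (auto simp: mat_over_def)
  have Phic: "Phi \<in> carrier_mat M N" using Y' B by (simp add: Phi_def)
  have KYc: "K * Y' \<in> carrier_mat N N" using Kc Y' by simp
  have "X' * B - K * Phi = 1\<^sub>m N"
    using ZB minus_mult_distrib_mat[OF X' KYc B] Kc Y' B by (simp add: Phi_def)
  hence XB: "X' * B = 1\<^sub>m N + K * Phi"
    using X' B Kc Phic by (intro minus_eq_imp[of _ N N]) auto
  have "(X' - K * Y') * (P * B) = ((X' - K * Y') * P) * B"
    using X' KYc P B by (simp add: assoc_mult_mat[of "X' - K * Y'" N N P N B N] minus_carrier_mat)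
  also have "\<dots> = (G * X' + H * Y' - K * (L * Y')) * B" by (simp add: ZP)
  also have "\<dots> = (G * X') * B + (H * Y') * B - (K * (L * Y')) * B"
    using Gc X' Hc Y' Kc Lc B
    by (simp add: minus_mult_distrib_mat[of _ N N] add_mult_distrib_mat[of _ N N])
  also have "\<dots> = G * (X' * B) + H * Phi - K * (L * Phi)"
    using Gc X' Hc Y' Kc Lc B
    by (simp add: Phi_def assoc_mult_mat[of K N M "L * Y'" N B N] assoc_mult_mat[of L M M Y' N B N])
  also have "\<dots> = G * (1\<^sub>m N + K * Phi) + H * Phi - K * (L * Phi)" by (simp add: XB)
  finally have C: "(X' - K * Y') * (P * B) = G * (1\<^sub>m N + K * Phi) + H * Phi - K * (L * Phi)" .
  have "map_mat d (G * (1\<^sub>m N + K * Phi) + H * Phi - K * (L * Phi))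
     = map_mat d (G * (1\<^sub>m N + K * Phi)) + map_mat d (H * Phi) - map_mat d (K * (L * Phi))"
    using Gc Hc Kc Lc Phic by (simp add: D_minus[OF okd, of _ N N] D_add[OF okd, of _ N N])
  also have "\<dots> = G * (K * map_mat d Phi) + H * map_mat d Phi - K * (L * map_mat d Phi)"
  proof -
    have c1: "1\<^sub>m N + K * Phi \<in> carrier_mat N N" using Kc Phic by simp
    have c2: "L * Phi \<in> carrier_mat M N" using Lc Phic by simp
    have "map_mat d (1\<^sub>m N + K * Phi) = K * map_mat d Phi"
      using D_add[OF okd, of "1\<^sub>m N" N N "K * Phi"] D_one[OF okd one] D_const[OF okd K dK Phic] Kc Phic
      by simp
    then show ?thesis
      by (simp add: D_const[OF okd G dG c1] D_const[OF okd H dH Phic] D_const[OF okd K dK c2]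
        D_const[OF okd L dL Phic])
  qed
  also have "\<dots> = (G * K + H - K * L) * map_mat d Phi"
    using Gc Hc Kc Lc Phic
    by (simp add: minus_mult_distrib_mat[of _ N M] add_mult_distrib_mat[of _ N M]
        assoc_mult_mat[of G N N K M "map_mat d Phi" N] assoc_mult_mat[of K N M L M "map_mat d Phi" N])
  finally show ?thesis using C by (simp add: Phi_def)
qed

theorem corollary1:
  fixes sc :: "complex \<Rightarrow> 'w::ring_1 \<Rightarrow> 'w"
    and Om :: "nat \<Rightarrow> 'w set" and d db :: "'w \<Rightarrow> 'w"
    and M N :: nat and P K X' Y' :: "'w mat"
  assumes bdga: "bidiff_graded_algebra sc Om d db"
    and MN: "M \<ge> 1" "N \<ge> 1"
    and P: "P \<in> mat_over (Om 0) N N"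
    and K: "K \<in> mat_over (Om 0) N M"
    and dK: "map_mat d K = 0\<^sub>m N M" and dbK: "map_mat db K = 0\<^sub>m N M"
    and X': "X' \<in> mat_over (Om 0) N N"
    and Y': "Y' \<in> mat_over (Om 0) M N"
    and eqX: "map_mat db X' = map_mat d X' * P"
    and eqY: "map_mat db Y' = map_mat d Y' * P"
  shows
   "(\<forall>R L B. R \<in> mat_over (Om 0) N N \<longrightarrow> L \<in> mat_over (Om 0) M M \<longrightarrow>
        map_mat d R = 0\<^sub>m N N \<longrightarrow> map_mat d L = 0\<^sub>m M M \<longrightarrow>
        L * Y' = Y' * P \<longrightarrow> R * X' = X' * P \<longrightarrow>
        B \<in> mat_over (Om 0) N N \<longrightarrow>
        (X' - K * Y') * B = 1\<^sub>m N \<longrightarrow> B * (X' - K * Y') = 1\<^sub>m N \<longrightarrow>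
        (let Phi = Y' * B; Q = R * K - K * L in
           map_mat db (map_mat d Phi) = map_mat d Phi * Q * map_mat d Phi))
    \<and>
    (M = N \<longrightarrow>
     (\<forall>L B. L \<in> mat_over (Om 0) N N \<longrightarrow> map_mat d L = 0\<^sub>m N N \<longrightarrow>
        L * Y' = Y' * P \<longrightarrow> L * X' + Y' = X' * P \<longrightarrow>
        B \<in> mat_over (Om 0) N N \<longrightarrow>
        (X' - K * Y') * B = 1\<^sub>m N \<longrightarrow> B * (X' - K * Y') = 1\<^sub>m N \<longrightarrow>
        (let Phi = Y' * B; Q = 1\<^sub>m N + (L * K - K * L) in
           map_mat db (map_mat d Phi) = map_mat d Phi * Q * map_mat d Phi)))"
proof -
  note defs = bidiff_graded_algebra_def graded_algebra_def complex_algebra_sc_def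
  have okd: "deriv_ok d Om" and okdb: "deriv_ok db Om"
    using bdga gd_ok unfolding bidiff_graded_algebra_def by blast+
  have dd: "\<forall>x. d (d x) = 0" using bdga unfolding bidiff_graded_algebra_def by blast
  have anti: "\<forall>x. db (d x) = - d (db x)"
  proof
    fix x have "d (db x) + db (d x) = 0" using bdga unfolding bidiff_graded_algebra_def by blast
    thus "db (d x) = - d (db x)" using minus_unique[of "d (db x)" "db (d x)"] by simp
  qed
  have one: "1 \<in> Om 0" and z0: "0 \<in> Om 0" and a0: "\<forall>x\<in>Om 0. \<forall>y\<in>Om 0. x + y \<in> Om 0"
    and sc0: "\<forall>a. \<forall>x\<in>Om 0. sc a x \<in> Om 0"
    and m0: "\<forall>x\<in>Om 0. \<forall>y\<in>Om 0. x * y \<in> Om 0"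
    using bdga unfolding defs by (metis add_0)+
  have cas: "complex_algebra_sc sc"
    using bdga unfolding bidiff_graded_algebra_def graded_algebra_def by blast
  have scadd: "\<And>a b x. sc (a + b) x = sc a x + sc b x"
    using cas unfolding complex_algebra_sc_def by blast
  have sc1: "\<And>x. sc 1 x = x"
    using cas unfolding complex_algebra_sc_def by blast
  have n0: "\<forall>x\<in>Om 0. - x \<in> Om 0"
  proof
    fix x assume x: "x \<in> Om 0"
    have s0: "sc 0 x = 0" using scadd[of 0 0 x] by simp
    have "sc (-1) x + x = 0" using scadd[of "-1" 1 x] s0 sc1 by simp
    hence "sc (-1) x = - x" by (simp add: eq_neg_iff_add_eq_0)
    thus "- x \<in> Om 0" using sc0 x by metis
  qed
  have Pc: "P \<in> carrier_mat N N" and Kc: "K \<in> carrier_mat N M" and X'c: "X' \<in> carrier_mat N N"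
    and Y'c: "Y' \<in> carrier_mat M N" using P K X' Y' by (auto simp: mat_over_def)
  have d0: "d 0 = 0" using d_0[OF okd] .
  show ?thesis
  proof (intro conjI allI impI)
    fix R L B
    assume R: "R \<in> mat_over (Om 0) N N" and L: "L \<in> mat_over (Om 0) M M"
      and dR: "map_mat d R = 0\<^sub>m N N" and dL: "map_mat d L = 0\<^sub>m M M"
      and LY: "L * Y' = Y' * P" and RX: "R * X' = X' * P"
      and B: "B \<in> mat_over (Om 0) N N"
      and ZB: "(X' - K * Y') * B = 1\<^sub>m N" and BZ: "B * (X' - K * Y') = 1\<^sub>m N"
    have Rc: "R \<in> carrier_mat N N" and Lc: "L \<in> carrier_mat M M" and Bc: "B \<in> carrier_mat N N"
      using R L B by (auto simp: mat_over_def)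
    have H: "0\<^sub>m N M \<in> mat_over (Om 0) N M" using z0 by (auto simp: mat_over_def)
    have dH: "map_mat d (0\<^sub>m N M) = 0\<^sub>m N M" using d0 by (intro eq_matI) auto
    have ZP: "(X' - K * Y') * P = R * X' + 0\<^sub>m N M * Y' - K * (L * Y')"
    proof -
      have "(X' - K * Y') * P = X' * P - (K * Y') * P"
        using X'c Kc Y'c Pc by (simp add: minus_mult_distrib_mat[of _ N N])
      also have "(K * Y') * P = K * (L * Y')" using Kc Y'c Pc by (simp add: LY)
      finally show ?thesis using RX Rc X'c Y'c Pc by simp
    qed
    have C: "map_mat d ((X' - K * Y') * (P * B)) = (R * K + 0\<^sub>m N M - K * L) * map_mat d (Y' * B)"
      by (rule Cform[OF okd one Pc K dK X'c Y'c Bc ZB R dR H dH L dL ZP])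
    have Q: "R * K + 0\<^sub>m N M - K * L = R * K - K * L" using Rc Kc Lc by simp
    have core': "map_mat db (map_mat d (Y' * B)) = map_mat d (Y' * B) * ((R * K - K * L) * map_mat d (Y' * B))"
      using core[OF okd okdb dd anti one z0 a0 n0 m0 Pc K dK dbK X' Y' eqX eqY B ZB BZ] C Q by simp
    have "R * K - K * L \<in> carrier_mat N M" using Rc Kc Lc by (intro minus_carrier_mat) simp
    then show "let Phi = Y' * B; Q = R * K - K * L
           in map_mat db (map_mat d Phi) = map_mat d Phi * Q * map_mat d Phi"
      using core' Y'c Bc
      by (simp add: Let_def assoc_mult_mat[of "map_mat d (Y' * B)" M N "R * K - K * L" M "map_mat d (Y' * B)" N])
  next
    fix L B
    assume MN: "M = N" and L: "L \<in> mat_over (Om 0) N N"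
      and dL: "map_mat d L = 0\<^sub>m N N"
      and LY: "L * Y' = Y' * P" and LX: "L * X' + Y' = X' * P"
      and B: "B \<in> mat_over (Om 0) N N"
      and ZB: "(X' - K * Y') * B = 1\<^sub>m N" and BZ: "B * (X' - K * Y') = 1\<^sub>m N"
    have Lc: "L \<in> carrier_mat N N" and Bc: "B \<in> carrier_mat N N"
      using L B by (auto simp: mat_over_def)
    have H: "1\<^sub>m N \<in> mat_over (Om 0) N M" using z0 one MN by (auto simp: mat_over_def)
    have dH: "map_mat d (1\<^sub>m N) = 0\<^sub>m N M" using D_one[OF okd one] MN by simp
    have ZP: "(X' - K * Y') * P = L * X' + 1\<^sub>m N * Y' - K * (L * Y')"
    proof -
      have "(X' - K * Y') * P = X' * P - (K * Y') * P"
        using X'c Kc Y'c Pc by (simp add: minus_mult_distrib_mat[of _ N N])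
      also have "(K * Y') * P = K * (L * Y')" using Kc Y'c Pc by (simp add: LY)
      finally show ?thesis using LX Y'c MN by simp
    qed
    have L': "L \<in> mat_over (Om 0) M M" and dL': "map_mat d L = 0\<^sub>m M M" using L dL MN by auto
    have C: "map_mat d ((X' - K * Y') * (P * B)) = (L * K + 1\<^sub>m N - K * L) * map_mat d (Y' * B)"
      by (rule Cform[OF okd one Pc K dK X'c Y'c Bc ZB L dL H dH L' dL' ZP])
    have Q: "L * K + 1\<^sub>m N - K * L = 1\<^sub>m N + (L * K - K * L)"
      using Lc Kc MN by (intro eq_matI) (auto simp: algebra_simps)
    have core': "map_mat db (map_mat d (Y' * B)) = map_mat d (Y' * B) * ((1\<^sub>m N + (L * K - K * L)) * map_mat d (Y' * B))"
      using core[OF okd okdb dd anti one z0 a0 n0 m0 Pc K dK dbK X' Y' eqX eqY B ZB BZ] C Q by simp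
    have "1\<^sub>m N + (L * K - K * L) \<in> carrier_mat N M" using Lc Kc MN by (simp add: minus_carrier_mat)
    then show "let Phi = Y' * B; Q = 1\<^sub>m N + (L * K - K * L)
           in map_mat db (map_mat d Phi) = map_mat d Phi * Q * map_mat d Phi"
      using core' Y'c Bc
      by (simp add: Let_def assoc_mult_mat[of "map_mat d (Y' * B)" M N "1\<^sub>m N + (L * K - K * L)" M "map_mat d (Y' * B)" N])
  qed
qed

end
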